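(* With the notation in the context, for any fixed $k\ge0$ and any fixed $B$, with $D=x^{3/4}/(\log x)^B$, \[ \sum_{d<D}\tau(d)^k\,\#\mathcal C_d\ll x(\log x)^{2^{2k+3}} \] for both $\mathcal C=\mathcal A$ and $\mathcal C=\mathcal B$.
   Context: Let $x$ be large and $p$ always denote primes. Fix $X$ with $x^{1/2}/(\log x)^4\le X\le x^{1/2}$, let $\eta=(\log x)^{-1}$ and $I=(X,X(1+\eta)]$. Define sequences $\mathcal A=\{a(n)\}$, $\mathcal B=\{b(n)\}$ by: for $n\le x$, $a(n)=\sum 2p\log p$ over representations $n=a^2+p^4$ with $a$ a positive integer, $p^2\in I$, $(a,p)=1$; and $b(n)=\sum\log p$ over representations $n=a^2+p^2$ with $a$ a positive integer, $p\in I$, $(a,p)=1$; and $a(n)=b(n)=0$ for $n>x$. For a sequence $\mathcal C=\{c(n)\}$ set $\#\mathcal C_d=\sum_{d\mid n}c(n)$. $\tau$ is the divisor function. *)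

theory Defs
  imports Complex_Main "HOL-Computational_Algebra.Primes"
begin

definition tau :: "nat \<Rightarrow> nat" where
  "tau d = card {m. m dvd d}"

definition inI :: "real \<Rightarrow> real \<Rightarrow> real \<Rightarrow> bool" where
  "inI x X t \<longleftrightarrow> X < t \<and> t \<le> X * (1 + 1 / ln x)"

definition seqA :: "real \<Rightarrow> real \<Rightarrow> nat \<Rightarrow> real" where
  "seqA x X n = (if real n \<le> x then
     (\<Sum>(a,p) \<in> {(a,p). a \<ge> 1 \<and> prime p \<and> inI x X (real (p^2)) \<and> coprime a p
                      \<and> n = a^2 + p^4}. 2 * real p * ln (real p))
     else 0)"

definition seqB :: "real \<Rightarrow> real \<Rightarrow> nat \<Rightarrow> real" where
  "seqB x X n = (if real n \<le> x then
     (\<Sum>(a,p) \<in> {(a,p). a \<ge> 1 \<and> prime p \<and> inI x X (real p) \<and> coprime a p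
                      \<and> n = a^2 + p^2}. ln (real p))
     else 0)"

definition countd :: "(nat \<Rightarrow> real) \<Rightarrow> real \<Rightarrow> nat \<Rightarrow> real" where
  "countd c x d = (\<Sum>n \<in> {n. real n \<le> x \<and> d dvd n}. c n)"

end

theory Submission
  imports Defs
begin


lemma tau_pos: "n > 0 \<Longrightarrow> tau n \<ge> 1"
proof -
  assume "n > 0"
  hence "1 \<in> {m. m dvd n}" by simp
  moreover have "finite {m. m dvd n}" using \<open>n>0\<close> by simp
  ultimately have "card {m. m dvd n} > 0" by (auto simp: card_gt_0_iff)
  thus ?thesis by (simp add: tau_def)
qed

lemma tau_mono: "d dvd n \<Longrightarrow> n > 0 \<Longrightarrow> tau d \<le> tau n"
  unfolding tau_def by (rule card_mono) (auto intro: dvd_trans)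

lemma tau_mult: assumes "a > 0" "b > 0" shows "tau (a*b) \<le> tau a * tau b"
proof -
  have "{m. m dvd a*b} \<subseteq> (\<lambda>(u,v). u*v) ` ({u. u dvd a} \<times> {v. v dvd b})"
  proof
    fix m assume "m \<in> {m. m dvd a*b}"
    then obtain u v where "m = u*v" "u dvd a" "v dvd b" using division_decomp by blast
    thus "m \<in> (\<lambda>(u,v). u*v) ` ({u. u dvd a} \<times> {v. v dvd b})" by auto
  qed
  hence "card {m. m dvd a*b} \<le> card ((\<lambda>(u,v). u*v) ` ({u. u dvd a} \<times> {v. v dvd b}))"
    using assms by (intro card_mono) auto
  also have "\<dots> \<le> card ({u. u dvd a} \<times> {v. v dvd b})" by (rule card_image_le) (use assms in auto)
  also have "\<dots> = tau a * tau b" by (simp add: tau_def card_cartesian_product)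
  finally show ?thesis by (simp add: tau_def)
qed

lemma tau_prime: "prime q \<Longrightarrow> tau q = 2"
proof -
  assume "prime q"
  hence "{m. m dvd q} = {1, q}" using prime_nat_iff by auto
  thus ?thesis using \<open>prime q\<close> prime_gt_1_nat[of q] by (simp add: tau_def)
qed

lemma tau_split:
  assumes "n > 0"
  shows "\<exists>d e. d dvd n \<and> e dvd n \<and> d^2 \<le> n \<and> e^2 \<le> n \<and> tau n \<le> 2 * tau d * tau e"
proof -
  let ?S = "{d. d dvd n \<and> d^2 \<le> n}"
  have fin: "finite ?S" using assms by simp
  have ne: "1 \<in> ?S" using assms by simp
  define d where "d = Max ?S"
  have dS: "d \<in> ?S" unfolding d_def using fin ne Max_in by blast
  have dmax: "\<And>y. y \<in> ?S \<Longrightarrow> y \<le> d" unfolding d_def using fin by simp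
  have dpos: "d > 0" using dS assms by (auto intro: Nat.gr0I)
  show ?thesis
  proof (cases "d = n")
    case True
    with dS have "n^2 \<le> n" by simp
    hence "n = 1" using assms by (metis One_nat_def dual_order.antisym le_square power2_eq_square
         less_one mult_le_cancel1 not_less_eq_eq nat_mult_1_right)
    thus ?thesis by (intro exI[of _ 1]) (simp add: tau_def)
  next
    case False
    obtain r where r: "n = d * r" using dS by blast
    have "r \<noteq> 1" using False r by auto
    hence "r > 1" using r assms by (cases r) auto
    then obtain q where q: "prime q" "q dvd r" using prime_factor_nat[of r] by auto
    obtain e where e: "r = q * e" using q by blast
    have ne: "n = (d*q) * e" using r e by simp
    have "d*q \<notin> ?S"
    proof
      assume "d*q \<in> ?S"
      hence "d*q \<le> d" by (rule dmax)
      thus False using dpos prime_gt_1_nat[OF q(1)] by simp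
    qed
    hence big: "(d*q)^2 > n" using ne by auto
    have epos: "e > 0" using ne assms by (auto intro: Nat.gr0I)
    have "e^2 \<le> n"
    proof (rule ccontr)
      assume "\<not> e^2 \<le> n"
      hence "e^2 > n" by simp
      have "e^2 * (d*q)^2 > n * n" using big epos \<open>e^2 > n\<close> by (intro mult_strict_mono) auto
      moreover have "e^2 * (d*q)^2 = n*n" using ne by (simp add: power2_eq_square algebra_simps)
      ultimately show False by simp
    qed
    moreover have "tau n \<le> 2 * tau d * tau e"
    proof -
      have "tau n = tau (d * (q * e))" using ne by (simp add: mult.assoc)
      also have "\<dots> \<le> tau d * tau (q*e)" using dpos epos prime_gt_1_nat[OF q(1)] by (intro tau_mult) auto
      also have "tau (q*e) \<le> tau q * tau e" using epos prime_gt_1_nat[OF q(1)] by (intro tau_mult) auto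
      hence "tau d * tau (q*e) \<le> tau d * (tau q * tau e)" by simp
      finally show ?thesis using tau_prime[OF q(1)] by simp
    qed
    moreover have "e dvd n" using ne by simp
    ultimately show ?thesis using dS by blast
  qed
qed



lemma sum_tau_pow_le: assumes "n > 0"
  shows "(\<Sum>d\<in>{d. d dvd n}. real (tau d) ^ k) \<le> real (tau n) ^ (Suc k)"
proof -
  have "(\<Sum>d\<in>{d. d dvd n}. real (tau d) ^ k) \<le> (\<Sum>d\<in>{d. d dvd n}. real (tau n) ^ k)"
    using assms by (intro sum_mono power_mono) (auto intro: tau_mono)
  also have "\<dots> = real (tau n) * real (tau n) ^ k" by (simp add: tau_def)
  finally show ?thesis by simp
qed

lemma tau_pow_split:
  assumes "n > 0" "\<And>d. d^2 \<le> n \<Longrightarrow> d \<le> M"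
  shows "real (tau n) ^ m \<le> 2^m * (\<Sum>d\<in>{1..M}. if d dvd n then real (tau d) ^ (2*m) else 0)"
proof -
  obtain d e where de: "d dvd n" "e dvd n" "d^2 \<le> n" "e^2 \<le> n" "tau n \<le> 2 * tau d * tau e"
    using tau_split[OF assms(1)] by blast
  have "\<exists>c. c dvd n \<and> c^2 \<le> n \<and> tau n \<le> 2 * tau c * tau c"
  proof (cases "tau d \<le> tau e")
    case True
    hence "tau n \<le> 2 * tau e * tau e" using de(5) by (meson le_trans mult_le_mono1 mult_le_mono2)
    thus ?thesis using de by blast
  next
    case False
    hence "tau n \<le> 2 * tau d * tau d" using de(5) by (meson le_trans mult_le_mono2 nat_le_linear)
    thus ?thesis using de by blast
  qed
  then obtain c where c: "c dvd n" "c^2 \<le> n" "tau n \<le> 2 * tau c * tau c" by blast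
  have cpos: "c > 0" using c assms(1) by (auto intro: Nat.gr0I)
  have cM: "c \<in> {1..M}" using cpos assms(2)[OF c(2)] by auto
  have "real (tau n) ^ m \<le> (2 * real (tau c) ^ 2) ^ m"
    using c(3) by (intro power_mono) (auto simp: power2_eq_square simp flip: of_nat_mult)
  also have "\<dots> = 2^m * real (tau c) ^ (2*m)" by (simp add: power_mult_distrib power_mult)
  also have "real (tau c) ^ (2*m) \<le> (\<Sum>d\<in>{1..M}. if d dvd n then real (tau d) ^ (2*m) else 0)"
    using member_le_sum[OF cM, of "\<lambda>d. if d dvd n then real (tau d) ^ (2*m) else 0"] c(1) by simp
  hence "2^m * real (tau c) ^ (2*m) \<le> 2^m * (\<Sum>d\<in>{1..M}. if d dvd n then real (tau d) ^ (2*m) else 0)"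
    by simp
  finally show ?thesis .
qed

definition SL :: "nat \<Rightarrow> nat \<Rightarrow> real" where
  "SL L M = (\<Sum>d\<in>{1..M}. real (tau d) ^ L / real d)"

lemma harm_bound: "(\<Sum>d\<in>{1..M}. 1 / real d) \<le> 1 + ln (real M)" if "M \<ge> 1" for M :: nat
  using that
proof (induction M rule: dec_induct)
  case base then show ?case by simp
next
  case (step k)
  have k: "real k \<ge> 1" using step by simp
  have "ln (real k / (real k + 1)) \<le> real k / (real k + 1) - 1"
    using k by (intro ln_le_minus_one) auto
  also have "\<dots> = - 1 / (real k + 1)" using k by (simp add: field_simps)
  finally have "1 / (real k + 1) \<le> ln (real k + 1) - ln (real k)"
    using k by (simp add: ln_div)
  moreover have "(\<Sum>d\<in>{1..Suc k}. 1 / real d) = (\<Sum>d\<in>{1..k}. 1 / real d) + 1 / (real k + 1)"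
    by (simp add: add.commute)
  ultimately show ?case using step by (simp add: add.commute)
qed

lemma SL_step: "SL (Suc L) M \<le> (SL L M)^2"
proof -
  define G where "G = (\<lambda>(e,f). real (tau e) ^ L / real e * (real (tau f) ^ L / real f))"
  define Sig where "Sig = (SIGMA d:{1..M}. {e. e dvd d})"
  define h where "h = (\<lambda>(d::nat,e::nat). (e, d div e))"
  have finSig: "finite Sig" unfolding Sig_def by (intro finite_SigmaI) auto
  have "SL (Suc L) M = (\<Sum>d\<in>{1..M}. \<Sum>e\<in>{e. e dvd d}. real (tau d) ^ L / real d)"
    unfolding SL_def by (intro sum.cong refl) (simp add: tau_def)
  also have "\<dots> \<le> (\<Sum>d\<in>{1..M}. \<Sum>e\<in>{e. e dvd d}. G (e, d div e))"
  proof (intro sum_mono)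
    fix d e assume d: "d \<in> {1..M}" and e: "e \<in> {e. e dvd d}"
    then obtain f where f: "d = e * f" by auto
    have pos: "e > 0" "f > 0" using d f by auto
    have "real (tau d) ^ L \<le> (real (tau e) * real (tau f)) ^ L"
      using tau_mult[OF pos] f by (intro power_mono) (auto simp flip: of_nat_mult)
    thus "real (tau d) ^ L / real d \<le> G (e, d div e)"
      using pos f by (simp add: G_def power_mult_distrib divide_right_mono)
  qed
  also have "\<dots> = (\<Sum>p\<in>Sig. G (h p))"
    unfolding Sig_def h_def by (subst sum.Sigma) (auto simp: case_prod_beta)
  also have "\<dots> = (\<Sum>y\<in>h ` Sig. G y)"
  proof (rule sum.reindex[symmetric, unfolded comp_def])
    show "inj_on h Sig" unfolding inj_on_def Sig_def h_def
      by (auto elim!: dvdE)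
  qed
  also have "\<dots> \<le> (\<Sum>y\<in>{1..M} \<times> {1..M}. G y)"
  proof (rule sum_mono2)
    show "h ` Sig \<subseteq> {1..M} \<times> {1..M}"
    proof
      fix y assume "y \<in> h ` Sig"
      then obtain d e where de: "d \<in> {1..M}" "e dvd d" "y = (e, d div e)"
        unfolding Sig_def h_def by auto
      then obtain f where f: "d = e * f" by auto
      have "e > 0" "f > 0" using de f by auto
      hence "e \<le> d" "f \<le> d" using f by auto
      moreover have "d \<le> M" using de(1) by simp
      moreover have "d div e = f" using f \<open>e>0\<close> by simp
      ultimately show "y \<in> {1..M} \<times> {1..M}" using de(3) \<open>e>0\<close> \<open>f>0\<close> by simp
    qed
  qed (auto simp: G_def)
  also have "\<dots> = (SL L M)^2"
    unfolding SL_def G_def power2_eq_square sum_product sum.cartesian_product by simp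
  finally show ?thesis .
qed

lemma SL_bound: "M \<ge> 1 \<Longrightarrow> SL L M \<le> (1 + ln (real M)) ^ (2^L)"
proof (induction L)
  case 0 then show ?case using harm_bound[of M] by (simp add: SL_def)
next
  case (Suc L)
  have nn: "0 \<le> SL L M" unfolding SL_def by (intro sum_nonneg) auto
  have "SL (Suc L) M \<le> (SL L M)^2" by (rule SL_step)
  also have "\<dots> \<le> ((1 + ln (real M)) ^ (2^L))^2" using Suc nn by (intro power_mono) auto
  also have "\<dots> = (1 + ln (real M)) ^ (2^Suc L)" by (simp add: power_mult[symmetric] mult.commute)
  finally show ?case .
qed



lemma dvd_gcd_prod:
  fixes u v D :: int assumes "D dvd u * v"
  shows "D dvd gcd u D * gcd v D"
proof -
  obtain s t where st: "s * u + t * D = gcd u D" using bezout_int by blast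
  obtain s' t' where st': "s' * v + t' * D = gcd v D" using bezout_int by blast
  have "gcd u D * gcd v D = s*s'*(u*v) + D * (s*u*t' + t*s'*v + t*t'*D)"
    unfolding st[symmetric] st'[symmetric] by (simp add: algebra_simps)
  thus ?thesis using assms by simp
qed

lemma pair_shape:
  fixes g1 g2 D :: int
  assumes "D > 0" "g1 > 0" "g2 > 0" "g1 dvd D" "g2 dvd D" "D dvd g1 * g2" "gcd g1 g2 dvd 2"
  shows "\<exists>t\<in>{1,2}. g2 = t * D div g1"
proof -
  obtain t where t: "g1 * g2 = D * t" using assms(6) by blast
  obtain s where s: "D = g2 * s" using assms(5) by blast
  obtain r where r: "D = g1 * r" using assms(4) by blast
  have "g1 * g2 = g2 * (s * t)" using t s by (simp add: algebra_simps)
  hence "g1 = s * t" using assms(3) by simp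
  hence t1: "t dvd g1" by simp
  have "g1 * g2 = g1 * (r * t)" using t r by (simp add: algebra_simps)
  hence "g2 = r * t" using assms(2) by simp
  hence t2: "t dvd g2" by simp
  have "t dvd 2" using t1 t2 assms(7) by (meson dvd_trans gcd_greatest)
  have "t > 0" using t assms(1-3) by (metis mult_pos_pos zero_less_mult_pos)
  have "t \<le> 2" using \<open>t dvd 2\<close> by (simp add: zdvd_imp_le)
  hence "t = 1 \<or> t = 2" using \<open>t>0\<close> by auto
  moreover have "t * D = g1 * g2" using t by simp
  hence "t * D div g1 = g2" using assms(2) by simp
  ultimately show ?thesis by auto
qed

lemma count_roots:
  fixes d h M :: nat assumes d1: "d \<ge> 1"
  shows "card {a. 1 \<le> a \<and> a \<le> M \<and> coprime a h \<and> d dvd a^2 + h} \<le> 2 * tau d * (2*M div d + 1)"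
proof -
  define T where "T = {a. 1 \<le> a \<and> a \<le> M \<and> coprime a h \<and> d dvd a^2 + h}"
  have finT: "finite T" unfolding T_def by (rule finite_subset[of _ "{..M}"]) auto
  show ?thesis
  proof (cases "T = {}")
    case True
    have "card T = 0" using True by simp
    thus ?thesis unfolding T_def by linarith
  next
    case False
    then obtain a0 where a0: "a0 \<in> T" by blast
    define D where "D = int d"
    have Dpos: "D > 0" using d1 by (simp add: D_def)
    have cop: "coprime (int a) D" if "a \<in> T" for a
    proof -
      have "coprime a h" "d dvd a^2 + h" using that by (auto simp: T_def)
      have "coprime a (h + a * a)" using \<open>coprime a h\<close>
        using gcd_add_mult[of a a h] by (simp add: coprime_iff_gcd_eq_1 add.commute)
      hence "coprime a (a^2 + h)" by (simp add: power2_eq_square add.commute)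
      hence "coprime a d" using \<open>d dvd a^2 + h\<close> by (meson coprime_divisors dvd_refl)
      thus ?thesis by (simp add: D_def)
    qed
    have Ddvd: "D dvd int (a^2 + h)" if "a \<in> T" for a
      using that by (simp add: T_def D_def flip: of_nat_dvd_iff del: of_nat_add of_nat_power)
    define \<phi> where "\<phi> = (\<lambda>a::nat. (gcd (int a - int a0) D, gcd (int a + int a0) D))"
    have prod: "D dvd fst (\<phi> a) * snd (\<phi> a)" if "a \<in> T" for a
    proof -
      have "D dvd int (a^2 + h) - int (a0^2 + h)" using Ddvd[OF that] Ddvd[OF a0] by (rule dvd_diff)
      also have "int (a^2 + h) - int (a0^2 + h) = (int a - int a0) * (int a + int a0)"
        by (simp add: algebra_simps power2_eq_square)
      finally show ?thesis unfolding \<phi>_def by (simp add: dvd_gcd_prod)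
    qed
    have gcd2: "gcd (fst (\<phi> a)) (snd (\<phi> a)) dvd 2" if "a \<in> T" for a
    proof -
      define c where "c = gcd (fst (\<phi> a)) (snd (\<phi> a))"
      have c1: "c dvd int a - int a0" "c dvd int a + int a0" "c dvd D"
        unfolding c_def \<phi>_def
        by (auto intro: dvd_trans[OF gcd_dvd1] dvd_trans[OF gcd_dvd2] dvd_trans[OF _ gcd_dvd1])
      have "c dvd (int a + int a0) - (int a - int a0)" using dvd_diff[OF c1(2) c1(1)] .
      hence "c dvd 2 * int a0" by simp
      moreover have "coprime c (int a0)"
        using cop[OF a0] c1(3) by (meson coprime_commute coprime_divisors dvd_refl)
      ultimately show ?thesis unfolding c_def[symmetric] by (simp add: coprime_dvd_mult_left_iff)
    qed
    have gpos: "fst (\<phi> a) > 0" "snd (\<phi> a) > 0" "fst (\<phi> a) dvd D" "snd (\<phi> a) dvd D" for a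
      using Dpos unfolding \<phi>_def by auto
    define \<psi> where "\<psi> = (\<lambda>(g::nat, t::int). (int g, t * D div int g))"
    have img: "\<phi> ` T \<subseteq> \<psi> ` ({g. g dvd d} \<times> {1,2})"
    proof
      fix y assume "y \<in> \<phi> ` T"
      then obtain a where a: "a \<in> T" "y = \<phi> a" by blast
      obtain t where t: "t \<in> {1,2}" "snd (\<phi> a) = t * D div fst (\<phi> a)"
        using pair_shape[OF Dpos gpos(1,2,3,4)[of a] prod[OF a(1)] gcd2[OF a(1)]] by blast
      define g where "g = nat (fst (\<phi> a))"
      have g: "int g = fst (\<phi> a)" using gpos(1)[of a] by (simp add: g_def)
      have "int g dvd int d" using gpos(3)[of a] g by (simp add: D_def)
      hence "g dvd d" by simp
      moreover have "y = \<psi> (g, t)" using a(2) t(2) g by (simp add: \<psi>_def prod_eq_iff)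
      ultimately show "y \<in> \<psi> ` ({g. g dvd d} \<times> {1,2})" using t(1) by blast
    qed
    have cardimg: "card (\<phi> ` T) \<le> 2 * tau d"
    proof -
      have "card (\<phi> ` T) \<le> card (\<psi> ` ({g. g dvd d} \<times> {1,2}))"
        using d1 by (intro card_mono img) auto
      also have "\<dots> \<le> card ({g. g dvd d} \<times> {1::int,2})" using d1 by (intro card_image_le) auto
      also have "\<dots> = 2 * tau d" by (simp add: card_cartesian_product tau_def)
      finally show ?thesis .
    qed
    have fib: "card {a\<in>T. \<phi> a = y} \<le> 2*M div d + 1" for y
    proof -
      have "card {a\<in>T. \<phi> a = y} = card ((\<lambda>a. 2*a div d) ` {a\<in>T. \<phi> a = y})"
      proof (rule card_image[symmetric], rule inj_onI)
        fix a a' assume a: "a \<in> {a\<in>T. \<phi> a = y}" and a': "a' \<in> {a\<in>T. \<phi> a = y}"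
          and eq: "2*a div d = 2*a' div d"
        have e: "\<phi> a = \<phi> a'" using a a' by simp
        define g1 where "g1 = fst (\<phi> a)"
        define g2 where "g2 = snd (\<phi> a)"
        have "g1 dvd int a - int a0" unfolding g1_def \<phi>_def by simp
        moreover have "g1 dvd int a' - int a0" unfolding g1_def e unfolding \<phi>_def by simp
        ultimately have "g1 dvd (int a - int a0) - (int a' - int a0)" by (rule dvd_diff)
        hence d1': "g1 dvd int a - int a'" by simp
        have "g2 dvd int a + int a0" unfolding g2_def \<phi>_def by simp
        moreover have "g2 dvd int a' + int a0" unfolding g2_def e unfolding \<phi>_def by simp
        ultimately have "g2 dvd (int a + int a0) - (int a' + int a0)" by (rule dvd_diff)
        hence d2': "g2 dvd int a - int a'" by simp
        have "lcm g1 g2 dvd int a - int a'" using d1' d2' by (rule lcm_least)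
        have aT: "a \<in> T" using a by simp
        have "D dvd g1 * g2" unfolding g1_def g2_def by (rule prod[OF aT])
        also have "g1 * g2 = gcd g1 g2 * lcm g1 g2"
          using prod_gcd_lcm_int[of g1 g2] gpos[of a] by (simp add: g1_def g2_def)
        also have "\<dots> dvd 2 * lcm g1 g2" using gcd2[OF aT] unfolding g1_def g2_def by (rule mult_dvd_mono[OF _ dvd_refl])
        also have "\<dots> dvd 2 * (int a - int a')" using \<open>lcm g1 g2 dvd int a - int a'\<close> by (rule mult_dvd_mono[OF dvd_refl])
        finally have "D dvd 2 * int a - 2 * int a'" by (simp add: algebra_simps)
        hence "(2*int a) mod D = (2*int a') mod D" by (simp add: mod_eq_dvd_iff)
        hence "int (2*a mod d) = int (2*a' mod d)" by (simp add: D_def of_nat_mod)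
        hence "2*a mod d = 2*a' mod d" by (simp only: of_nat_eq_iff)
        hence "2*a = 2*a'" using eq by (metis div_mult_mod_eq)
        thus "a = a'" by simp
      qed
      also have "\<dots> \<le> card {0..2*M div d}"
      proof (rule card_mono)
        show "(\<lambda>a. 2*a div d) ` {a\<in>T. \<phi> a = y} \<subseteq> {0..2*M div d}"
          by (auto simp: T_def intro!: div_le_mono)
      qed simp
      finally show ?thesis by simp
    qed
    have "T = (\<Union>y\<in>\<phi> ` T. {a\<in>T. \<phi> a = y})" by blast
    hence "card T \<le> (\<Sum>y\<in>\<phi> ` T. card {a\<in>T. \<phi> a = y})"
      using finT by (metis card_UN_le finite_imageI)
    also have "\<dots> \<le> card (\<phi> ` T) * (2*M div d + 1)" using sum_bounded_above[of "\<phi> ` T" "\<lambda>y. card {a\<in>T. \<phi> a = y}" "2*M div d + 1"] fib by simp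
    also have "\<dots> \<le> 2 * tau d * (2*M div d + 1)" using cardimg by (rule mult_le_mono1)
    finally show ?thesis by (simp add: T_def)
  qed
qed



lemma le_floor_sqrt: fixes k :: nat assumes "real k ^ 2 \<le> x" shows "k \<le> nat \<lfloor>sqrt x\<rfloor>"
proof -
  have "real k \<le> sqrt x" using assms by (intro real_le_rsqrt) simp
  thus ?thesis by (simp add: le_nat_floor)
qed

lemma core:
  fixes h m :: nat and x :: real
  assumes "x \<ge> 1"
  shows "(\<Sum>a\<in>{a. 1 \<le> a \<and> coprime a h \<and> real (a^2+h) \<le> x}. real (tau (a^2+h))^m)
          \<le> 6 * 2^m * real (nat \<lfloor>sqrt x\<rfloor>) * SL (2*m+1) (nat \<lfloor>sqrt x\<rfloor>)"
proof -
  define M where "M = nat \<lfloor>sqrt x\<rfloor>"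
  define A where "A = {a. 1 \<le> a \<and> coprime a h \<and> real (a^2+h) \<le> x}"
  have aM: "a \<le> M" if "a \<in> A" for a
  proof -
    have "real a ^ 2 \<le> x" using that by (auto simp: A_def)
    thus ?thesis unfolding M_def by (rule le_floor_sqrt)
  qed
  have finA: "finite A" by (rule finite_subset[of _ "{..M}"]) (use aM in auto)
  define F where "F = (\<lambda>n d. if d dvd n then real (tau d) ^ (2*m) else 0)"
  have "(\<Sum>a\<in>A. real (tau (a^2+h))^m) \<le> (\<Sum>a\<in>A. 2^m * (\<Sum>d\<in>{1..M}. F (a^2+h) d))"
  proof (rule sum_mono)
    fix a assume a: "a \<in> A"
    show "real (tau (a^2+h))^m \<le> 2^m * (\<Sum>d\<in>{1..M}. F (a^2+h) d)"
      unfolding F_def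
    proof (rule tau_pow_split)
      show "a^2 + h > 0" using a by (auto simp: A_def)
      fix d :: nat assume "d^2 \<le> a^2 + h"
      hence "real d ^ 2 \<le> x" using a by (auto simp: A_def simp flip: of_nat_power intro: order.trans)
      thus "d \<le> M" unfolding M_def by (rule le_floor_sqrt)
    qed
  qed
  also have "\<dots> = 2^m * (\<Sum>d\<in>{1..M}. \<Sum>a\<in>A. F (a^2+h) d)"
    by (simp add: sum_distrib_left[symmetric] sum.swap[of _ A])
  also have "\<dots> \<le> 2^m * (\<Sum>d\<in>{1..M}. 6 * real M * (real (tau d) ^ (2*m+1) / real d))"
  proof (intro mult_left_mono sum_mono)
    fix d assume d: "d \<in> {1..M}"
    have "(\<Sum>a\<in>A. F (a^2+h) d) = (\<Sum>a\<in>{a\<in>A. d dvd a^2+h}. real (tau d) ^ (2*m))"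
      unfolding F_def sum.inter_filter[OF finA, symmetric] by (rule refl)
    also have "\<dots> = real (card {a\<in>A. d dvd a^2+h}) * real (tau d) ^ (2*m)" by simp
    also have "real (card {a\<in>A. d dvd a^2+h}) \<le> 2 * real (tau d) * (3 * real M / real d)"
    proof -
      have "card {a\<in>A. d dvd a^2+h} \<le> card {a. 1 \<le> a \<and> a \<le> M \<and> coprime a h \<and> d dvd a^2 + h}"
        by (rule card_mono) (auto simp: A_def intro: aM[unfolded A_def])
      also have "\<dots> \<le> 2 * tau d * (2*M div d + 1)" using d by (intro count_roots) auto
      finally have "real (card {a\<in>A. d dvd a^2+h}) \<le> real (2 * tau d * (2*M div d + 1))"
        by (simp only: of_nat_le_iff)
      hence c: "real (card {a\<in>A. d dvd a^2+h}) \<le> 2 * real (tau d) * (real (2*M div d) + 1)"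
        by (simp add: algebra_simps)
      have "real (2*M div d) \<le> 2 * real M / real d" using d
        using of_nat_div_le_of_nat[of "2*M" d] by simp
      moreover have "1 \<le> real M / real d" using d by simp
      ultimately have "real (2*M div d) + 1 \<le> 3 * real M / real d" by simp
      hence "2 * real (tau d) * (real (2*M div d) + 1) \<le> 2 * real (tau d) * (3 * real M / real d)"
        by (intro mult_left_mono) auto
      with c show ?thesis by linarith
    qed
    hence "real (card {a\<in>A. d dvd a^2+h}) * real (tau d) ^ (2*m)
           \<le> 2 * real (tau d) * (3 * real M / real d) * real (tau d) ^ (2*m)"
      by (intro mult_right_mono) auto
    also have "\<dots> = 6 * real M * (real (tau d) ^ (2*m+1) / real d)" by (simp add: field_simps)
    finally show "(\<Sum>a\<in>A. F (a^2+h) d) \<le> 6 * real M * (real (tau d) ^ (2*m+1) / real d)" .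
  qed simp
  also have "\<dots> = 6 * 2^m * real M * SL (2*m+1) M"
    unfolding SL_def by (simp add: sum_distrib_left mult.assoc mult.left_commute)
  finally show ?thesis by (simp add: A_def M_def)
qed



lemma finite_real_le: "finite {d::nat. real d \<le> Y}"
  by (rule finite_subset[of _ "{..nat \<lfloor>Y\<rfloor>}"]) (auto intro: le_nat_floor)

lemma step1:
  fixes c :: "nat \<Rightarrow> real" and Ds :: "nat set"
  assumes fD: "finite Ds" and nn: "\<And>n. c n \<ge> 0" and c0: "c 0 = 0"
  shows "(\<Sum>d\<in>Ds. real (tau d) ^ k * countd c x d)
         \<le> (\<Sum>n\<in>{n. real n \<le> x}. c n * real (tau n) ^ Suc k)"
proof -
  define N where "N = {n::nat. real n \<le> x}"
  have fN: "finite N" unfolding N_def by (rule finite_real_le)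
  have cd: "countd c x d = (\<Sum>n\<in>N. if d dvd n then c n else 0)" for d
  proof -
    have "{n. real n \<le> x \<and> d dvd n} = {n\<in>N. d dvd n}" by (auto simp: N_def)
    thus ?thesis unfolding countd_def using sum.inter_filter[OF fN] by simp
  qed
  have "(\<Sum>d\<in>Ds. real (tau d) ^ k * countd c x d)
        = (\<Sum>d\<in>Ds. \<Sum>n\<in>N. if d dvd n then real (tau d) ^ k * c n else 0)"
    unfolding cd by (simp add: sum_distrib_left if_distrib cong: if_cong)
  also have "\<dots> = (\<Sum>n\<in>N. \<Sum>d\<in>Ds. if d dvd n then real (tau d) ^ k * c n else 0)"
    by (rule sum.swap)
  also have "\<dots> \<le> (\<Sum>n\<in>N. c n * real (tau n) ^ Suc k)"
  proof (rule sum_mono)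
    fix n assume "n \<in> N"
    show "(\<Sum>d\<in>Ds. if d dvd n then real (tau d) ^ k * c n else 0) \<le> c n * real (tau n) ^ Suc k"
    proof (cases "n = 0")
      case True then show ?thesis using c0 by simp
    next
      case False
      have "(\<Sum>d\<in>Ds. if d dvd n then real (tau d) ^ k * c n else 0)
            = c n * (\<Sum>d\<in>{d\<in>Ds. d dvd n}. real (tau d) ^ k)"
        by (simp add: sum.inter_filter[OF fD] sum_distrib_left mult.commute if_distrib cong: if_cong)
      also have "(\<Sum>d\<in>{d\<in>Ds. d dvd n}. real (tau d) ^ k) \<le> (\<Sum>d\<in>{d. d dvd n}. real (tau d) ^ k)"
        using False by (intro sum_mono2) auto
      also have "\<dots> \<le> real (tau n) ^ Suc k" using False by (intro sum_tau_pow_le) simp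
      finally show ?thesis using nn[of n] by (simp add: mult_left_mono)
    qed
  qed
  finally show ?thesis by (simp add: N_def)
qed

lemma regroup:
  fixes P :: "(nat \<times> nat) set" and g :: "nat \<times> nat \<Rightarrow> nat" and w :: "nat \<times> nat \<Rightarrow> real"
  assumes fP: "finite P" and fN: "finite N" and sub: "g ` P \<subseteq> N"
    and eq: "\<And>n. n \<in> N \<Longrightarrow> c n = (\<Sum>q\<in>{q\<in>P. g q = n}. w q)"
  shows "(\<Sum>n\<in>N. c n * F n) = (\<Sum>q\<in>P. w q * F (g q))"
proof -
  have "(\<Sum>n\<in>N. c n * F n) = (\<Sum>n\<in>N. \<Sum>q\<in>{q. q \<in> P \<and> g q = n}. w q * F (g q))"
    by (intro sum.cong refl) (simp add: eq sum_distrib_right)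
  also have "\<dots> = (\<Sum>q\<in>P. w q * F (g q))" by (rule sum.group[OF fP fN sub])
  finally show ?thesis .
qed

lemma fiber_bound:
  fixes P :: "(nat \<times> nat) set" and w :: "nat \<Rightarrow> real" and h :: "nat \<Rightarrow> nat" and K :: real
  assumes fP: "finite P"
    and fib: "\<And>p. p \<in> snd ` P \<Longrightarrow> {q\<in>P. snd q = p}
               = (\<lambda>a. (a,p)) ` {a. 1 \<le> a \<and> coprime a (h p) \<and> real (a^2 + h p) \<le> x}"
    and K: "\<And>p. (\<Sum>a\<in>{a. 1 \<le> a \<and> coprime a (h p) \<and> real (a^2 + h p) \<le> x}. real (tau (a^2 + h p))^m) \<le> K"
    and sub: "snd ` P \<subseteq> R" and fR: "finite R" and wnn: "\<And>p. p \<in> R \<Longrightarrow> w p \<ge> 0"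
    and K0: "K \<ge> 0"
  shows "(\<Sum>q\<in>P. w (snd q) * real (tau (fst q ^ 2 + h (snd q)))^m) \<le> K * (\<Sum>p\<in>R. w p)"
proof -
  have "(\<Sum>q\<in>P. w (snd q) * real (tau (fst q ^ 2 + h (snd q)))^m)
      = (\<Sum>p\<in>snd ` P. \<Sum>q\<in>{q. q \<in> P \<and> snd q = p}. w (snd q) * real (tau (fst q ^ 2 + h (snd q)))^m)"
    by (rule sum.group[OF fP _ subset_refl, symmetric]) (use fP in simp)
  also have "\<dots> \<le> (\<Sum>p\<in>snd ` P. w p * K)"
  proof (rule sum_mono)
    fix p assume p: "p \<in> snd ` P"
    define Ap where "Ap = {a. 1 \<le> a \<and> coprime a (h p) \<and> real (a^2 + h p) \<le> x}"
    have "(\<Sum>q\<in>{q. q \<in> P \<and> snd q = p}. w (snd q) * real (tau (fst q ^ 2 + h (snd q)))^m)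
          = (\<Sum>q\<in>(\<lambda>a. (a,p)) ` Ap. w (snd q) * real (tau (fst q ^ 2 + h (snd q)))^m)"
      using fib[OF p] by (simp add: Ap_def)
    also have "\<dots> = (\<Sum>a\<in>Ap. w p * real (tau (a ^ 2 + h p))^m)"
      by (subst sum.reindex) (auto simp: inj_on_def)
    also have "\<dots> = w p * (\<Sum>a\<in>Ap. real (tau (a ^ 2 + h p))^m)" by (simp add: sum_distrib_left)
    also have "\<dots> \<le> w p * K" using K[of p] wnn[of p] p sub unfolding Ap_def
      by (intro mult_left_mono) auto
    finally show "(\<Sum>q\<in>{q. q \<in> P \<and> snd q = p}. w (snd q) * real (tau (fst q ^ 2 + h (snd q)))^m) \<le> w p * K" .
  qed
  also have "\<dots> \<le> (\<Sum>p\<in>R. w p * K)"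
    using sub fR wnn K0 by (intro sum_mono2) auto
  also have "\<dots> = K * (\<Sum>p\<in>R. w p)" by (simp add: sum_distrib_left mult.commute)
  finally show ?thesis .
qed

lemma card_interval:
  fixes \<alpha> \<beta> :: real assumes "0 \<le> \<alpha>" "\<alpha> \<le> \<beta>"
  shows "real (card {p::nat. \<alpha> < real p \<and> real p \<le> \<beta>}) \<le> \<beta> - \<alpha> + 1"
proof -
  have "{p::nat. \<alpha> < real p \<and> real p \<le> \<beta>} \<subseteq> {nat \<lfloor>\<alpha>\<rfloor> + 1 .. nat \<lfloor>\<beta>\<rfloor>}"
  proof
    fix p assume p: "p \<in> {p::nat. \<alpha> < real p \<and> real p \<le> \<beta>}"
    have "p \<le> nat \<lfloor>\<beta>\<rfloor>" using p by (auto intro: le_nat_floor)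
    moreover have "\<alpha> < real p" using p by simp
    hence "\<lfloor>\<alpha>\<rfloor> < int p" by (simp add: floor_less_iff)
    hence "nat \<lfloor>\<alpha>\<rfloor> < p" using assms(1) by (simp add: nat_less_iff)
    ultimately show "p \<in> {nat \<lfloor>\<alpha>\<rfloor> + 1 .. nat \<lfloor>\<beta>\<rfloor>}" by simp
  qed
  hence "card {p::nat. \<alpha> < real p \<and> real p \<le> \<beta>} \<le> card {nat \<lfloor>\<alpha>\<rfloor> + 1 .. nat \<lfloor>\<beta>\<rfloor>}"
    by (intro card_mono) auto
  also have "\<dots> = nat \<lfloor>\<beta>\<rfloor> + 1 - (nat \<lfloor>\<alpha>\<rfloor> + 1)" by simp
  finally have c: "card {p::nat. \<alpha> < real p \<and> real p \<le> \<beta>} \<le> nat \<lfloor>\<beta>\<rfloor> - nat \<lfloor>\<alpha>\<rfloor>" by simp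
  have "real (nat \<lfloor>\<beta>\<rfloor> - nat \<lfloor>\<alpha>\<rfloor>) \<le> \<beta> - \<alpha> + 1"
  proof -
    have "\<lfloor>\<alpha>\<rfloor> \<le> \<lfloor>\<beta>\<rfloor>" using assms by (intro floor_mono)
    hence "real (nat \<lfloor>\<beta>\<rfloor> - nat \<lfloor>\<alpha>\<rfloor>) = of_int \<lfloor>\<beta>\<rfloor> - of_int \<lfloor>\<alpha>\<rfloor>"
      using assms by (simp add: of_nat_diff)
    also have "\<dots> \<le> \<beta> - \<alpha> + 1" by linarith
    finally show ?thesis .
  qed
  with c show ?thesis by (meson of_nat_le_iff order_trans)
qed

lemma sum_interval:
  fixes \<alpha> \<beta> B :: real and f :: "nat \<Rightarrow> real"
  assumes "0 \<le> \<alpha>" "\<alpha> \<le> \<beta>" "\<And>p. \<alpha> < real p \<Longrightarrow> real p \<le> \<beta> \<Longrightarrow> f p \<le> B" "B \<ge> 0"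
  shows "(\<Sum>p\<in>{p::nat. \<alpha> < real p \<and> real p \<le> \<beta>}. f p) \<le> (\<beta> - \<alpha> + 1) * B"
proof -
  have "(\<Sum>p\<in>{p::nat. \<alpha> < real p \<and> real p \<le> \<beta>}. f p) \<le> (\<Sum>p\<in>{p::nat. \<alpha> < real p \<and> real p \<le> \<beta>}. B)"
    using assms(3) by (intro sum_mono) auto
  also have "\<dots> = real (card {p::nat. \<alpha> < real p \<and> real p \<le> \<beta>}) * B" by simp
  also have "\<dots> \<le> (\<beta> - \<alpha> + 1) * B" using card_interval[OF assms(1,2)] assms(4)
    by (intro mult_right_mono) auto
  finally show ?thesis .
qed



lemma sqrt_one_plus: "t \<ge> 0 \<Longrightarrow> sqrt (1 + t) \<le> 1 + t/2"
  by (rule real_le_lsqrt) (auto simp: power2_eq_square algebra_simps)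

lemma big_x:
  fixes x :: real assumes "x \<ge> 2^32"
  shows "ln x \<ge> 2" "2 * ln x \<le> sqrt (sqrt x)" "ln x \<le> sqrt x" "2 * sqrt x \<le> x" "x \<ge> 16"
    "sqrt (sqrt x) \<le> sqrt x" "1 \<le> sqrt (sqrt x)"
proof -
  show x16: "x \<ge> 16" using assms by simp
  have "exp (2::real) = exp 1 ^ 2" by (simp flip: exp_of_nat_mult)
  also have "\<dots> \<le> 3^2" using exp_le by (intro power_mono) auto
  finally have "exp (2::real) \<le> x" using x16 by simp
  thus L2: "ln x \<ge> 2" using x16 by (simp add: ln_ge_iff)
  define s where "s = sqrt (sqrt (sqrt x))"
  have x0: "x > 0" using x16 by simp
  have s2: "s^2 = sqrt (sqrt x)" using x0 by (simp add: s_def)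
  have s4: "s^4 = sqrt x" using x0 s2 by (metis power_mult num_double numeral_times_numeral real_sqrt_pow2 real_sqrt_ge_zero less_imp_le)
  have s8: "s^8 = x" using x0 s4 by (metis power_mult num_double numeral_times_numeral real_sqrt_pow2 less_imp_le)
  note ss = s2 s4 s8
  have s0: "s > 0" using x0 by (simp add: s_def)
  have "16^8 \<le> s^8" using assms ss by simp
  have s16: "16 \<le> s"
  proof (rule ccontr)
    assume "\<not> 16 \<le> s"
    hence "s^8 < 16^8" using s0 by (intro power_strict_mono) auto
    thus False using \<open>16^8 \<le> s^8\<close> by simp
  qed
  have "ln x = 8 * ln s" using ss s0 by (metis ln_realpow of_nat_numeral)
  also have "\<dots> \<le> 8 * s" using s0 ln_le_minus_one[of s] by simp
  finally have lnx: "ln x \<le> 8 * s" .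
  have "16 * s \<le> s * s" using s16 s0 by (intro mult_right_mono) auto
  thus "2 * ln x \<le> sqrt (sqrt x)" using lnx ss by (simp add: power2_eq_square)
  have "s^2 \<le> s^4" using s16 by (intro power_increasing) auto
  thus sq: "sqrt (sqrt x) \<le> sqrt x" using ss by simp
  show "1 \<le> sqrt (sqrt x)" using x16 by simp
  show "ln x \<le> sqrt x" using \<open>2 * ln x \<le> sqrt (sqrt x)\<close> sq L2 by linarith
  have "2 \<le> sqrt x" using x16 by (simp add: real_le_rsqrt)
  hence "2 * sqrt x \<le> sqrt x * sqrt x" using x0 by (intro mult_right_mono) auto
  thus "2 * sqrt x \<le> x" using x0 by simp
qed



lemma weightB:
  fixes x X :: real
  assumes x: "x \<ge> 2^32" and X: "X > 0" "X \<le> sqrt x"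
  shows "(\<Sum>p\<in>{p::nat. X < real p \<and> real p \<le> X*(1+1/ln x)}. ln (real p)) \<le> 2 * sqrt x"
proof -
  note bx = big_x[OF x]
  define L where "L = ln x"
  have L2: "L \<ge> 2" using bx by (simp add: L_def)
  have "(\<Sum>p\<in>{p::nat. X < real p \<and> real p \<le> X*(1+1/ln x)}. ln (real p)) \<le> (X*(1+1/L) - X + 1) * L"
    unfolding L_def
  proof (rule sum_interval)
    show "0 \<le> X" using X by simp
    show "X \<le> X * (1 + 1 / ln x)" using X L2 by (simp add: L_def)
    show "0 \<le> ln x" using L2 by (simp add: L_def)
    fix p :: nat assume p: "X < real p" "real p \<le> X * (1 + 1 / ln x)"
    have "X * (1 + 1/ln x) \<le> X * 2" using X L2 by (intro mult_left_mono) (auto simp: L_def)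
    hence "real p \<le> x" using p X bx by linarith
    thus "ln (real p) \<le> ln x" using p X by simp
  qed
  also have "\<dots> = X + L" using L2 by (simp add: field_simps)
  also have "\<dots> \<le> 2 * sqrt x" using X bx(3) by (simp add: L_def)
  finally show ?thesis .
qed

lemma weightA:
  fixes x X :: real
  assumes x: "x \<ge> 2^32" and X: "X > 0" "X \<le> sqrt x"
  shows "(\<Sum>p\<in>{p::nat. sqrt X < real p \<and> real p \<le> sqrt (X*(1+1/ln x))}. 2 * real p * ln (real p))
           \<le> 4 * sqrt x"
proof -
  note bx = big_x[OF x]
  define L where "L = ln x"
  have L2: "L \<ge> 2" using bx by (simp add: L_def)
  define Y where "Y = sqrt (X*(1+1/L))"
  have Yeq: "Y = sqrt X * sqrt (1 + 1/L)" by (simp add: Y_def real_sqrt_mult)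
  have "sqrt (1 + 1/L) \<le> 1 + (1/L)/2" using L2 by (intro sqrt_one_plus) simp
  hence Yle: "Y \<le> sqrt X * (1 + 1/(2*L))" unfolding Yeq using X by (intro mult_left_mono) auto
  have "1 + 1/(2*L) \<le> 2" using L2 by (simp add: field_simps)
  hence "sqrt X * (1 + 1/(2*L)) \<le> sqrt X * 2" using X by (intro mult_left_mono) auto
  hence Y2: "Y \<le> 2 * sqrt X" using Yle by linarith
  have sX: "sqrt X \<le> sqrt (sqrt x)" using X by simp
  have "(\<Sum>p\<in>{p::nat. sqrt X < real p \<and> real p \<le> Y}. 2 * real p * ln (real p))
          \<le> (Y - sqrt X + 1) * (2 * (2 * sqrt X) * L)"
  proof (rule sum_interval)
    show "0 \<le> sqrt X" using X by simp
    have "1 \<le> sqrt (1 + 1/L)" using L2 by simp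
    thus "sqrt X \<le> Y" unfolding Yeq using X by (simp add: mult_le_cancel_left1)
    show "0 \<le> 2 * (2 * sqrt X) * L" using X L2 by simp
    fix p :: nat assume p: "sqrt X < real p" "real p \<le> Y"
    have "sqrt X > 0" using X by simp
    hence pp: "real p > 0" using p by linarith
    have "real p \<le> x" using p Y2 sX bx by linarith
    hence lp: "ln (real p) \<le> L" using pp by (simp add: L_def)
    have "ln (real p) \<ge> 0" using pp by (simp add: Suc_leI)
    have "2 * real p * ln (real p) \<le> 2 * (2 * sqrt X) * L"
      using X p(2) Y2 lp \<open>ln (real p) \<ge> 0\<close> pp by (intro mult_mono) auto
    thus "2 * real p * ln (real p) \<le> 2 * (2 * sqrt X) * L" .
  qed
  also have "\<dots> \<le> (sqrt X / (2*L) + 1) * (2 * (2 * sqrt X) * L)"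
    using Yle X L2 by (intro mult_right_mono) (auto simp: field_simps)
  also have "\<dots> = 2 * (sqrt X * sqrt X) + 4 * sqrt X * L" using L2 by (simp add: field_simps)
  also have "\<dots> = 2 * X + 4 * sqrt X * L" using X by simp
  also have "\<dots> \<le> 2 * sqrt x + 2 * sqrt (sqrt x) * (2 * L)" 
  proof -
    have "sqrt X * L \<le> sqrt (sqrt x) * L" using sX L2 by (intro mult_right_mono) auto
    thus ?thesis using X by simp
  qed
  also have "\<dots> \<le> 2 * sqrt x + 2 * sqrt (sqrt x) * sqrt (sqrt x)"
    using bx by (intro add_left_mono mult_left_mono) (auto simp: L_def)
  also have "\<dots> = 4 * sqrt x" using bx by simp
  finally show ?thesis by (simp add: Y_def L_def)
qed



lemma final_generic:
  fixes c :: "nat \<Rightarrow> real" and P :: "(nat \<times> nat) set" and w :: "nat \<Rightarrow> real"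
    and h :: "nat \<Rightarrow> nat" and R :: "nat set" and Ds :: "nat set" and x :: real
  assumes x: "x \<ge> 2^32" and fD: "finite Ds" and nn: "\<And>n. c n \<ge> 0" and c0: "c 0 = 0"
    and fP: "finite P"
    and sub: "(\<lambda>q. fst q ^ 2 + h (snd q)) ` P \<subseteq> {n. real n \<le> x}"
    and eq: "\<And>n. real n \<le> x \<Longrightarrow> c n = (\<Sum>q\<in>{q\<in>P. fst q ^ 2 + h (snd q) = n}. w (snd q))"
    and fib: "\<And>p. p \<in> snd ` P \<Longrightarrow> {q\<in>P. snd q = p}
               = (\<lambda>a. (a,p)) ` {a. 1 \<le> a \<and> coprime a (h p) \<and> real (a^2 + h p) \<le> x}"
    and subR: "snd ` P \<subseteq> R" and fR: "finite R" and wnn: "\<And>p. p \<in> R \<Longrightarrow> w p \<ge> 0"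
    and W: "(\<Sum>p\<in>R. w p) \<le> 4 * sqrt x"
  shows "(\<Sum>d\<in>Ds. real (tau d) ^ k * countd c x d) \<le> 24 * 2^(k+1) * x * ln x ^ (2^(2*k+3))"
proof -
  note bx = big_x[OF x]
  define m where "m = Suc k"
  define M where "M = nat \<lfloor>sqrt x\<rfloor>"
  define L where "L = ln x"
  define K where "K = 6 * 2^m * real M * SL (2*m+1) M"
  have L2: "L \<ge> 2" using bx by (simp add: L_def)
  have x1: "x \<ge> 1" using bx by simp
  have M1: "M \<ge> 1" using x1 by (simp add: M_def le_nat_floor)
  have Msq: "real M \<le> sqrt x" using x1 by (simp add: M_def)
  have SL0: "SL (2*m+1) M \<ge> 0" unfolding SL_def by (intro sum_nonneg) auto
  have K0: "K \<ge> 0" using SL0 by (simp add: K_def)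
  have "(\<Sum>d\<in>Ds. real (tau d) ^ k * countd c x d) \<le> (\<Sum>n\<in>{n. real n \<le> x}. c n * real (tau n) ^ Suc k)"
    by (rule step1[of Ds c, OF fD nn c0])
  also have "\<dots> = (\<Sum>q\<in>P. w (snd q) * real (tau (fst q ^ 2 + h (snd q))) ^ m)"
    unfolding m_def
    by (rule regroup[OF fP finite_real_le sub, where w = "\<lambda>q. w (snd q)"]) (simp add: eq)
  also have "\<dots> \<le> K * (\<Sum>p\<in>R. w p)"
  proof (rule fiber_bound[OF fP fib _ subR fR wnn K0])
    fix p show "(\<Sum>a\<in>{a. 1 \<le> a \<and> coprime a (h p) \<and> real (a^2 + h p) \<le> x}. real (tau (a^2 + h p))^m) \<le> K"
      unfolding K_def M_def by (rule core[OF x1])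
  qed auto
  also have "\<dots> \<le> K * (4 * sqrt x)" using W K0 by (intro mult_left_mono)
  also have "K \<le> 6 * 2^m * sqrt x * L ^ (2^(2*m+1))"
  proof -
    have "SL (2*m+1) M \<le> (1 + ln (real M)) ^ (2^(2*m+1))" by (rule SL_bound[OF M1])
    also have "\<dots> \<le> L ^ (2^(2*m+1))"
    proof (rule power_mono)
      have "ln (real M) \<le> ln (sqrt x)" using M1 Msq by (intro ln_mono) auto
      also have "\<dots> = L / 2" using x1 by (simp add: L_def ln_sqrt)
      finally show "1 + ln (real M) \<le> L" using L2 by simp
      show "0 \<le> 1 + ln (real M)" using M1 by simp
    qed
    finally have "SL (2*m+1) M \<le> L ^ (2^(2*m+1))" .
    hence "real M * SL (2*m+1) M \<le> sqrt x * L ^ (2^(2*m+1))" using Msq SL0 x1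
      by (intro mult_mono) auto
    thus ?thesis by (simp add: K_def mult.assoc)
  qed
  hence "K * (4 * sqrt x) \<le> 6 * 2^m * sqrt x * L ^ (2^(2*m+1)) * (4 * sqrt x)"
    using x1 by (intro mult_right_mono) auto
  also have "\<dots> = 24 * 2^m * (sqrt x * sqrt x) * L ^ (2^(2*m+1))" by (simp add: algebra_simps)
  also have "\<dots> = 24 * 2^(k+1) * x * ln x ^ (2^(2*k+3))" using x1 by (simp add: m_def L_def power_add mult.commute)
  finally show ?thesis .
qed



lemma prime_ln_nonneg: "prime (p::nat) \<Longrightarrow> 0 \<le> ln (real p)"
  using prime_gt_1_nat[of p] by simp

lemma finite_Ds: "finite {d::nat. 1 \<le> d \<and> real d < Y}"
  by (rule finite_subset[OF _ finite_real_le[of Y]]) auto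

lemma boundA:
  fixes x X :: real
  assumes x: "x \<ge> 2^32" and X: "X > 0" "X \<le> sqrt x" and fD: "finite Ds"
  shows "(\<Sum>d\<in>Ds. real (tau d) ^ k * countd (seqA x X) x d) \<le> 24 * 2^(k+1) * x * ln x ^ (2^(2*k+3))"
proof -
  define PA where "PA = {(a,p). a \<ge> 1 \<and> prime p \<and> inI x X (real (p^2)) \<and> coprime a p \<and> real (a^2 + p^4) \<le> x}"
  define RA where "RA = {p::nat. sqrt X < real p \<and> real p \<le> sqrt (X*(1+1/ln x))}"
  show ?thesis
  proof (rule final_generic[OF x fD, where P = PA and h = "\<lambda>p. p^4" and w = "\<lambda>p. 2 * real p * ln (real p)" and R = RA])
    show "seqA x X n \<ge> 0" for n
      unfolding seqA_def by (auto intro!: sum_nonneg simp: prime_ln_nonneg)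
    show "seqA x X 0 = 0"
    proof -
      have "{(a,p). a \<ge> 1 \<and> prime p \<and> inI x X (real (p^2)) \<and> coprime a p \<and> (0::nat) = a^2 + p^4} = {}"
        by auto
      thus ?thesis unfolding seqA_def by (subst \<open>_ = {}\<close>) simp
    qed
    have bnd: "a \<le> nat \<lfloor>x\<rfloor> \<and> p \<le> nat \<lfloor>x\<rfloor>" if "real a ^ 2 + real p ^ 4 \<le> x" for a p :: nat
    proof -
      have that: "real (a^2 + p^4) \<le> x" using that by simp
      have "a \<le> a^2" by (cases "a = 0") (simp_all add: self_le_power)
      have "p \<le> p^4" by (cases "p = 0") (simp_all add: self_le_power)
      hence "a \<le> a^2 + p^4" "p \<le> a^2 + p^4" using \<open>a \<le> a^2\<close> by linarith+
      hence "real a \<le> x" "real p \<le> x" using that by (meson of_nat_le_iff order_trans)+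
      thus ?thesis by (auto intro: le_nat_floor)
    qed
    show fP: "finite PA"
      by (rule finite_subset[of _ "{..nat \<lfloor>x\<rfloor>} \<times> {..nat \<lfloor>x\<rfloor>}"]) (auto simp: PA_def dest: bnd)
    show "(\<lambda>q. fst q ^ 2 + snd q ^ 4) ` PA \<subseteq> {n. real n \<le> x}" by (auto simp: PA_def)
    show "seqA x X n = (\<Sum>q\<in>{q\<in>PA. fst q ^ 2 + snd q ^ 4 = n}. 2 * real (snd q) * ln (real (snd q)))"
      if "real n \<le> x" for n
    proof -
      have "{(a,p). a \<ge> 1 \<and> prime p \<and> inI x X (real (p^2)) \<and> coprime a p \<and> n = a^2 + p^4}
            = {q\<in>PA. fst q ^ 2 + snd q ^ 4 = n}" using that by (auto simp: PA_def)
      thus ?thesis using that unfolding seqA_def by (simp add: case_prod_beta)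
    qed
    show "{q\<in>PA. snd q = p} = (\<lambda>a. (a,p)) ` {a. 1 \<le> a \<and> coprime a (p^4) \<and> real (a^2 + p^4) \<le> x}"
      if "p \<in> snd ` PA" for p
      using that by (auto simp: PA_def)
    show "snd ` PA \<subseteq> RA"
    proof
      fix p assume "p \<in> snd ` PA"
      then have I: "inI x X (real (p^2))" by (auto simp: PA_def)
      hence "X < real p ^ 2" "real p ^ 2 \<le> X * (1 + 1 / ln x)" by (auto simp: inI_def)
      hence "sqrt X < sqrt (real p ^ 2)" "sqrt (real p ^ 2) \<le> sqrt (X * (1 + 1 / ln x))"
        by (simp_all only: real_sqrt_less_iff real_sqrt_le_iff)
      thus "p \<in> RA" by (simp add: RA_def)
    qed
    show "finite RA" by (rule finite_subset[OF _ finite_real_le[of "sqrt (X*(1+1/ln x))"]]) (auto simp: RA_def)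
    show "2 * real p * ln (real p) \<ge> 0" if "p \<in> RA" for p
    proof -
      have "sqrt X > 0" using X by simp
      moreover have "sqrt X < real p" using that by (simp add: RA_def)
      ultimately have "real p > 0" by linarith
      thus ?thesis by (simp add: Suc_leI)
    qed
    show "(\<Sum>p\<in>RA. 2 * real p * ln (real p)) \<le> 4 * sqrt x" unfolding RA_def by (rule weightA[OF x X])
  qed
qed

lemma boundB:
  fixes x X :: real
  assumes x: "x \<ge> 2^32" and X: "X > 0" "X \<le> sqrt x" and fD: "finite Ds"
  shows "(\<Sum>d\<in>Ds. real (tau d) ^ k * countd (seqB x X) x d) \<le> 24 * 2^(k+1) * x * ln x ^ (2^(2*k+3))"
proof -
  define PB where "PB = {(a,p). a \<ge> 1 \<and> prime p \<and> inI x X (real p) \<and> coprime a p \<and> real (a^2 + p^2) \<le> x}"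
  define RB where "RB = {p::nat. X < real p \<and> real p \<le> X*(1+1/ln x)}"
  show ?thesis
  proof (rule final_generic[OF x fD, where P = PB and h = "\<lambda>p. p^2" and w = "\<lambda>p. ln (real p)" and R = RB])
    show "seqB x X n \<ge> 0" for n
      unfolding seqB_def by (auto intro!: sum_nonneg simp: prime_ln_nonneg)
    show "seqB x X 0 = 0"
    proof -
      have "{(a,p). a \<ge> 1 \<and> prime p \<and> inI x X (real p) \<and> coprime a p \<and> (0::nat) = a^2 + p^2} = {}"
        by auto
      thus ?thesis unfolding seqB_def by (subst \<open>_ = {}\<close>) simp
    qed
    have bnd: "a \<le> nat \<lfloor>x\<rfloor> \<and> p \<le> nat \<lfloor>x\<rfloor>" if "real a ^ 2 + real p ^ 2 \<le> x" for a p :: nat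
    proof -
      have that: "real (a^2 + p^2) \<le> x" using that by simp
      have "a \<le> a^2" by (cases "a = 0") (simp_all add: self_le_power)
      have "p \<le> p^2" by (cases "p = 0") (simp_all add: self_le_power)
      hence "a \<le> a^2 + p^2" "p \<le> a^2 + p^2" using \<open>a \<le> a^2\<close> by linarith+
      hence "real a \<le> x" "real p \<le> x" using that by (meson of_nat_le_iff order_trans)+
      thus ?thesis by (auto intro: le_nat_floor)
    qed
    show fP: "finite PB"
      by (rule finite_subset[of _ "{..nat \<lfloor>x\<rfloor>} \<times> {..nat \<lfloor>x\<rfloor>}"]) (auto simp: PB_def dest: bnd)
    show "(\<lambda>q. fst q ^ 2 + snd q ^ 2) ` PB \<subseteq> {n. real n \<le> x}" by (auto simp: PB_def)
    show "seqB x X n = (\<Sum>q\<in>{q\<in>PB. fst q ^ 2 + snd q ^ 2 = n}. ln (real (snd q)))"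
      if "real n \<le> x" for n
    proof -
      have "{(a,p). a \<ge> 1 \<and> prime p \<and> inI x X (real p) \<and> coprime a p \<and> n = a^2 + p^2}
            = {q\<in>PB. fst q ^ 2 + snd q ^ 2 = n}" using that by (auto simp: PB_def)
      thus ?thesis using that unfolding seqB_def by (simp add: case_prod_beta)
    qed
    show "{q\<in>PB. snd q = p} = (\<lambda>a. (a,p)) ` {a. 1 \<le> a \<and> coprime a (p^2) \<and> real (a^2 + p^2) \<le> x}"
      if "p \<in> snd ` PB" for p
      using that by (auto simp: PB_def)
    show "snd ` PB \<subseteq> RB" by (auto simp: PB_def RB_def inI_def)
    show "finite RB" by (rule finite_subset[OF _ finite_real_le[of "X*(1+1/ln x)"]]) (auto simp: RB_def)
    show "ln (real p) \<ge> 0" if "p \<in> RB" for p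
    proof -
      have "real p > 0" using that X by (auto simp: RB_def)
      thus ?thesis by (simp add: Suc_leI)
    qed
    have "(\<Sum>p\<in>RB. ln (real p)) \<le> 2 * sqrt x" unfolding RB_def by (rule weightB[OF x X])
    also have "\<dots> \<le> 4 * sqrt x" using big_x[OF x] by simp
    finally show "(\<Sum>p\<in>RB. ln (real p)) \<le> 4 * sqrt x" .
  qed
qed

theorem mainTheorem11:
  fixes k :: nat and B :: real
  shows "\<exists>C x0. \<forall>x X. x \<ge> x0 \<and> sqrt x / (ln x)^4 \<le> X \<and> X \<le> sqrt x \<longrightarrow>
     (\<Sum>d \<in> {d. 1 \<le> d \<and> real d < x powr (3/4) / (ln x) powr B}.
        real (tau d) ^ k * countd (seqA x X) x d) \<le> C * x * (ln x) ^ (2 ^ (2*k+3))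
   \<and> (\<Sum>d \<in> {d. 1 \<le> d \<and> real d < x powr (3/4) / (ln x) powr B}.
        real (tau d) ^ k * countd (seqB x X) x d) \<le> C * x * (ln x) ^ (2 ^ (2*k+3))"
proof (intro exI allI impI)
  fix x X :: real
  assume h: "2^32 \<le> x \<and> sqrt x / (ln x)^4 \<le> X \<and> X \<le> sqrt x"
  hence x: "x \<ge> 2^32" by simp
  note bx = big_x[OF x]
  have "sqrt x / (ln x)^4 > 0" using bx by simp
  hence X: "X > 0" "X \<le> sqrt x" using h by linarith+
  note fD = finite_Ds[of "x powr (3/4) / (ln x) powr B"]
  show "(\<Sum>d \<in> {d. 1 \<le> d \<and> real d < x powr (3/4) / (ln x) powr B}.
        real (tau d) ^ k * countd (seqA x X) x d) \<le> 24 * 2^(k+1) * x * (ln x) ^ (2 ^ (2*k+3))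
   \<and> (\<Sum>d \<in> {d. 1 \<le> d \<and> real d < x powr (3/4) / (ln x) powr B}.
        real (tau d) ^ k * countd (seqB x X) x d) \<le> 24 * 2^(k+1) * x * (ln x) ^ (2 ^ (2*k+3))"
    using boundA[OF x X fD] boundB[OF x X fD] by blast
qed


end
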